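(* Let $(A,B)$ be an imprecise copula. Then $(A,A_M)$ and $(B_O,B)$ are imprecise copulas, and $A\le A_M\le B$ and $A\le B_O\le B$; i.e. there is an imprecise copula contained in $(A,B)$ with the same lower bound and one with the same upper bound.
   Context: Quasi-copula: $Q:[0,1]^2\to\mathbb{R}$ grounded, with neutral element $1$, with $V_Q(R)\ge0$ for each rectangle having a side on the boundary of $[0,1]^2$, where $V_Q([s_1,s_2]\times[t_1,t_2])=Q(s_1,t_1)+Q(s_2,t_2)-Q(s_2,t_1)-Q(s_1,t_2)$. Defects: $\mathcal{R}_\nearrow(\mathbf{x}),\mathcal{R}_\swarrow(\mathbf{x}),\mathcal{R}_\nwarrow(\mathbf{x}),\mathcal{R}_\searrow(\mathbf{x})$ are the sets of (possibly degenerate) rectangles in $[0,1]^2$ with $\mathbf{x}$ as southwest, northeast, southeast, northwest corner; $D^Q_\bullet(\mathbf{x})=\inf\{V_Q(R):R\in\mathcal{R}_\bullet(\mathbf{x})\}$; $D^Q_M=\min(D^Q_\nearrow,D^Q_\swarrow)$, $D^Q_O=\min(D^Q_\nwarrow,D^Q_\searrow)$; $Q_M=Q-D^Q_M$, $Q_O=Q+D^Q_O$. Imprecise copula: a pair $(A,B)$ of grounded functions with neutral element 1 satisfying, for all rectangles with SW, SE, NE, NW corners $\mathbf{a},\mathbf{b},\mathbf{c},\mathbf{d}$: $A(\mathbf{a})+B(\mathbf{c})-A(\mathbf{b})-A(\mathbf{d})\ge0$, $B(\mathbf{a})+A(\mathbf{c})-A(\mathbf{b})-A(\mathbf{d})\ge0$,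 $B(\mathbf{a})+B(\mathbf{c})-B(\mathbf{b})-A(\mathbf{d})\ge0$, $B(\mathbf{a})+B(\mathbf{c})-A(\mathbf{b})-B(\mathbf{d})\ge0$. In an imprecise copula $A,B$ are quasi-copulas with $A\le B$. *)

theory Defs
  imports Complex_Main
begin

text \<open>Functions on the unit square are represented as curried functions
  real \<Rightarrow> real \<Rightarrow> real; only their values on [0,1]^2 matter.\<close>

definition grounded :: "(real \<Rightarrow> real \<Rightarrow> real) \<Rightarrow> bool" where
  "grounded Q \<longleftrightarrow> (\<forall>x\<in>{0..1}. Q x 0 = 0 \<and> Q 0 x = 0)"

definition neutral_one :: "(real \<Rightarrow> real \<Rightarrow> real) \<Rightarrow> bool" where
  "neutral_one Q \<longleftrightarrow> (\<forall>x\<in>{0..1}. Q x 1 = x \<and> Q 1 x = x)"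

definition vol :: "(real \<Rightarrow> real \<Rightarrow> real) \<Rightarrow> real \<Rightarrow> real \<Rightarrow> real \<Rightarrow> real \<Rightarrow> real" where
  "vol Q s1 s2 t1 t2 = Q s1 t1 + Q s2 t2 - Q s2 t1 - Q s1 t2"

definition quasi_copula :: "(real \<Rightarrow> real \<Rightarrow> real) \<Rightarrow> bool" where
  "quasi_copula Q \<longleftrightarrow> grounded Q \<and> neutral_one Q \<and>
     (\<forall>s1 s2 t1 t2. 0 \<le> s1 \<and> s1 \<le> s2 \<and> s2 \<le> 1 \<and> 0 \<le> t1 \<and> t1 \<le> t2 \<and> t2 \<le> 1 \<and>
        (s1 = 0 \<or> s2 = 1 \<or> t1 = 0 \<or> t2 = 1) \<longrightarrow> vol Q s1 s2 t1 t2 \<ge> 0)"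

text \<open>Defects. (x,y) is the SW / NE / SE / NW corner respectively.\<close>
definition defect_NE :: "(real \<Rightarrow> real \<Rightarrow> real) \<Rightarrow> real \<Rightarrow> real \<Rightarrow> real" where
  "defect_NE Q x y = Inf {vol Q x s y t | s t. x \<le> s \<and> s \<le> 1 \<and> y \<le> t \<and> t \<le> 1}"

definition defect_SW :: "(real \<Rightarrow> real \<Rightarrow> real) \<Rightarrow> real \<Rightarrow> real \<Rightarrow> real" where
  "defect_SW Q x y = Inf {vol Q s x t y | s t. 0 \<le> s \<and> s \<le> x \<and> 0 \<le> t \<and> t \<le> y}"

definition defect_NW :: "(real \<Rightarrow> real \<Rightarrow> real) \<Rightarrow> real \<Rightarrow> real \<Rightarrow> real" where
  "defect_NW Q x y = Inf {vol Q s x y t | s t. 0 \<le> s \<and> s \<le> x \<and> y \<le> t \<and> t \<le> 1}"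

definition defect_SE :: "(real \<Rightarrow> real \<Rightarrow> real) \<Rightarrow> real \<Rightarrow> real \<Rightarrow> real" where
  "defect_SE Q x y = Inf {vol Q x s t y | s t. x \<le> s \<and> s \<le> 1 \<and> 0 \<le> t \<and> t \<le> y}"

definition defect_M :: "(real \<Rightarrow> real \<Rightarrow> real) \<Rightarrow> real \<Rightarrow> real \<Rightarrow> real" where
  "defect_M Q x y = min (defect_NE Q x y) (defect_SW Q x y)"

definition defect_O :: "(real \<Rightarrow> real \<Rightarrow> real) \<Rightarrow> real \<Rightarrow> real \<Rightarrow> real" where
  "defect_O Q x y = min (defect_NW Q x y) (defect_SE Q x y)"

definition Q_M :: "(real \<Rightarrow> real \<Rightarrow> real) \<Rightarrow> real \<Rightarrow> real \<Rightarrow> real" where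
  "Q_M Q x y = Q x y - defect_M Q x y"

definition Q_O :: "(real \<Rightarrow> real \<Rightarrow> real) \<Rightarrow> real \<Rightarrow> real \<Rightarrow> real" where
  "Q_O Q x y = Q x y + defect_O Q x y"

text \<open>Imprecise copula: rectangle [s1,s2] x [t1,t2] with corners
  a = (s1,t1) (SW), b = (s2,t1) (SE), c = (s2,t2) (NE), d = (s1,t2) (NW).\<close>
definition imprecise_copula :: "(real \<Rightarrow> real \<Rightarrow> real) \<Rightarrow> (real \<Rightarrow> real \<Rightarrow> real) \<Rightarrow> bool" where
  "imprecise_copula A B \<longleftrightarrow> grounded A \<and> neutral_one A \<and> grounded B \<and> neutral_one B \<and>
     (\<forall>s1 s2 t1 t2. 0 \<le> s1 \<and> s1 \<le> s2 \<and> s2 \<le> 1 \<and> 0 \<le> t1 \<and> t1 \<le> t2 \<and> t2 \<le> 1 \<longrightarrow>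
        A s1 t1 + B s2 t2 - A s2 t1 - A s1 t2 \<ge> 0 \<and>
        B s1 t1 + A s2 t2 - A s2 t1 - A s1 t2 \<ge> 0 \<and>
        B s1 t1 + B s2 t2 - B s2 t1 - A s1 t2 \<ge> 0 \<and>
        B s1 t1 + B s2 t2 - A s2 t1 - B s1 t2 \<ge> 0)"

end

theory Submission
  imports Defs
begin

lemma IC:
  assumes "imprecise_copula A B" "0\<le>s1" "s1\<le>s2" "s2\<le>1" "0\<le>t1" "t1\<le>t2" "t2\<le>1"
  shows "A s1 t1 + B s2 t2 - A s2 t1 - A s1 t2 \<ge> 0 \<and>
        B s1 t1 + A s2 t2 - A s2 t1 - A s1 t2 \<ge> 0 \<and>
        B s1 t1 + B s2 t2 - B s2 t1 - A s1 t2 \<ge> 0 \<and>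
        B s1 t1 + B s2 t2 - A s2 t1 - B s1 t2 \<ge> 0"
  using assms unfolding imprecise_copula_def by blast

lemma NE_le: assumes "bdd_below {vol Q x s y t | s t. x \<le> s \<and> s \<le> 1 \<and> y \<le> t \<and> t \<le> 1}"
  "x \<le> s" "s \<le> 1" "y \<le> t" "t \<le> 1" shows "defect_NE Q x y \<le> vol Q x s y t"
  unfolding defect_NE_def using assms by (intro cInf_lower) auto
lemma SW_le: assumes "bdd_below {vol Q s x t y | s t. 0 \<le> s \<and> s \<le> x \<and> 0 \<le> t \<and> t \<le> y}"
  "0 \<le> s" "s \<le> x" "0 \<le> t" "t \<le> y" shows "defect_SW Q x y \<le> vol Q s x t y"
  unfolding defect_SW_def using assms by (intro cInf_lower) auto
lemma NW_le: assumes "bdd_below {vol Q s x y t | s t. 0 \<le> s \<and> s \<le> x \<and> y \<le> t \<and> t \<le> 1}"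
  "0 \<le> s" "s \<le> x" "y \<le> t" "t \<le> 1" shows "defect_NW Q x y \<le> vol Q s x y t"
  unfolding defect_NW_def using assms by (intro cInf_lower) auto
lemma SE_le: assumes "bdd_below {vol Q x s t y | s t. x \<le> s \<and> s \<le> 1 \<and> 0 \<le> t \<and> t \<le> y}"
  "x \<le> s" "s \<le> 1" "0 \<le> t" "t \<le> y" shows "defect_SE Q x y \<le> vol Q x s t y"
  unfolding defect_SE_def using assms by (intro cInf_lower) auto

lemma NE_ge: assumes "x \<le> 1" "y \<le> 1" "\<And>s t. x \<le> s \<Longrightarrow> s \<le> 1 \<Longrightarrow> y \<le> t \<Longrightarrow> t \<le> 1 \<Longrightarrow> c \<le> vol Q x s y t"
  shows "c \<le> defect_NE Q x y"
  unfolding defect_NE_def using assms by (intro cInf_greatest) auto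
lemma SW_ge: assumes "0 \<le> x" "0 \<le> y" "\<And>s t. 0 \<le> s \<Longrightarrow> s \<le> x \<Longrightarrow> 0 \<le> t \<Longrightarrow> t \<le> y \<Longrightarrow> c \<le> vol Q s x t y"
  shows "c \<le> defect_SW Q x y"
  unfolding defect_SW_def using assms by (intro cInf_greatest) auto
lemma NW_ge: assumes "0 \<le> x" "y \<le> 1" "\<And>s t. 0 \<le> s \<Longrightarrow> s \<le> x \<Longrightarrow> y \<le> t \<Longrightarrow> t \<le> 1 \<Longrightarrow> c \<le> vol Q s x y t"
  shows "c \<le> defect_NW Q x y"
  unfolding defect_NW_def using assms by (intro cInf_greatest) auto
lemma SE_ge: assumes "x \<le> 1" "0 \<le> y" "\<And>s t. x \<le> s \<Longrightarrow> s \<le> 1 \<Longrightarrow> 0 \<le> t \<Longrightarrow> t \<le> y \<Longrightarrow> c \<le> vol Q x s t y"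
  shows "c \<le> defect_SE Q x y"
  unfolding defect_SE_def using assms by (intro cInf_greatest) auto

lemma bdd_A_NE: assumes "imprecise_copula A B" "0\<le>x" "x\<le>1" "0\<le>y" "y\<le>1"
  shows "bdd_below {vol A x s y t | s t. x \<le> s \<and> s \<le> 1 \<and> y \<le> t \<and> t \<le> 1}"
  unfolding bdd_below_def
proof (intro exI ballI)
  fix z assume "z \<in> {vol A x s y t | s t. x \<le> s \<and> s \<le> 1 \<and> y \<le> t \<and> t \<le> 1}"
  then obtain s t where "z = vol A x s y t" "x \<le> s" "s \<le> 1" "y \<le> t" "t \<le> 1" by blast
  with IC[OF assms(1), of x s y t] assms show "A x y - B x y \<le> z" by (auto simp: vol_def)
qed
lemma bdd_A_SW: assumes "imprecise_copula A B" "0\<le>x" "x\<le>1" "0\<le>y" "y\<le>1"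
  shows "bdd_below {vol A s x t y | s t. 0 \<le> s \<and> s \<le> x \<and> 0 \<le> t \<and> t \<le> y}"
  unfolding bdd_below_def
proof (intro exI ballI)
  fix z assume "z \<in> {vol A s x t y | s t. 0 \<le> s \<and> s \<le> x \<and> 0 \<le> t \<and> t \<le> y}"
  then obtain s t where "z = vol A s x t y" "0 \<le> s" "s \<le> x" "0 \<le> t" "t \<le> y" by blast
  with IC[OF assms(1), of s x t y] assms show "A x y - B x y \<le> z" by (auto simp: vol_def)
qed
lemma bdd_B_NW: assumes "imprecise_copula A B" "0\<le>x" "x\<le>1" "0\<le>y" "y\<le>1"
  shows "bdd_below {vol B s x y t | s t. 0 \<le> s \<and> s \<le> x \<and> y \<le> t \<and> t \<le> 1}"
  unfolding bdd_below_def
proof (intro exI ballI)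
  fix z assume "z \<in> {vol B s x y t | s t. 0 \<le> s \<and> s \<le> x \<and> y \<le> t \<and> t \<le> 1}"
  then obtain s t where "z = vol B s x y t" "0 \<le> s" "s \<le> x" "y \<le> t" "t \<le> 1" by blast
  with IC[OF assms(1), of s x y t] assms show "A x y - B x y \<le> z" by (auto simp: vol_def)
qed
lemma bdd_B_SE: assumes "imprecise_copula A B" "0\<le>x" "x\<le>1" "0\<le>y" "y\<le>1"
  shows "bdd_below {vol B x s t y | s t. x \<le> s \<and> s \<le> 1 \<and> 0 \<le> t \<and> t \<le> y}"
  unfolding bdd_below_def
proof (intro exI ballI)
  fix z assume "z \<in> {vol B x s t y | s t. x \<le> s \<and> s \<le> 1 \<and> 0 \<le> t \<and> t \<le> y}"
  then obtain s t where "z = vol B x s t y" "x \<le> s" "s \<le> 1" "0 \<le> t" "t \<le> y" by blast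
  with IC[OF assms(1), of x s t y] assms show "A x y - B x y \<le> z" by (auto simp: vol_def)
qed

lemma MNE: assumes "imprecise_copula A B" "0\<le>x" "x \<le> s" "s \<le> 1" "0\<le>y" "y \<le> t" "t \<le> 1"
  shows "defect_M A x y \<le> vol A x s y t"
  using NE_le[OF bdd_A_NE[OF assms(1)], of x y s t] assms unfolding defect_M_def by auto
lemma MSW: assumes "imprecise_copula A B" "0 \<le> s" "s \<le> x" "x\<le>1" "0 \<le> t" "t \<le> y" "y\<le>1"
  shows "defect_M A x y \<le> vol A s x t y"
  using SW_le[OF bdd_A_SW[OF assms(1)], of x y s t] assms unfolding defect_M_def by auto
lemma ONW: assumes "imprecise_copula A B" "0 \<le> s" "s \<le> x" "x\<le>1" "0\<le>y" "y \<le> t" "t \<le> 1"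
  shows "defect_O B x y \<le> vol B s x y t"
  using NW_le[OF bdd_B_NW[OF assms(1)], of x y s t] assms unfolding defect_O_def by auto
lemma OSE: assumes "imprecise_copula A B" "0\<le>x" "x \<le> s" "s \<le> 1" "0 \<le> t" "t \<le> y" "y\<le>1"
  shows "defect_O B x y \<le> vol B x s t y"
  using SE_le[OF bdd_B_SE[OF assms(1)], of x y s t] assms unfolding defect_O_def by auto

lemma volA_bd: assumes "imprecise_copula A B" "0\<le>s1" "s1\<le>s2" "s2\<le>1" "0\<le>t1" "t1\<le>t2" "t2\<le>1"
  "s1 = 0 \<or> s2 = 1 \<or> t1 = 0 \<or> t2 = 1"
  shows "vol A s1 s2 t1 t2 \<ge> 0"
proof -
  have g: "grounded A" "neutral_one A" "grounded B" "neutral_one B" using assms(1) unfolding imprecise_copula_def by auto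
  show ?thesis using IC[OF assms(1-7)] assms(2-8) g unfolding grounded_def neutral_one_def vol_def
    by (elim disjE) auto
qed

lemma volB_bd: assumes "imprecise_copula A B" "0\<le>s1" "s1\<le>s2" "s2\<le>1" "0\<le>t1" "t1\<le>t2" "t2\<le>1"
  "s1 = 0 \<or> s2 = 1 \<or> t1 = 0 \<or> t2 = 1"
  shows "vol B s1 s2 t1 t2 \<ge> 0"
proof -
  have g: "grounded A" "neutral_one A" "grounded B" "neutral_one B" using assms(1) unfolding imprecise_copula_def by auto
  show ?thesis using IC[OF assms(1-7)] assms(2-8) g unfolding grounded_def neutral_one_def vol_def
    by (elim disjE) auto
qed

lemma M_nonpos: assumes "imprecise_copula A B" "0\<le>x" "x\<le>1" "0\<le>y" "y\<le>1"
  shows "defect_M A x y \<le> 0"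
  using MNE[OF assms(1), of x x y y] assms by (simp add: vol_def)

lemma O_nonpos: assumes "imprecise_copula A B" "0\<le>x" "x\<le>1" "0\<le>y" "y\<le>1"
  shows "defect_O B x y \<le> 0"
  using OSE[OF assms(1), of x x y y] assms by (simp add: vol_def)

lemma M_bd: assumes "imprecise_copula A B" "0\<le>x" "x\<le>1" "0\<le>y" "y\<le>1" "x=0 \<or> x=1 \<or> y=0 \<or> y=1"
  shows "defect_M A x y = 0"
proof -
  have "0 \<le> defect_NE A x y"
    using assms by (intro NE_ge) (auto intro!: volA_bd[OF assms(1)])
  moreover have "0 \<le> defect_SW A x y"
    using assms by (intro SW_ge) (auto intro!: volA_bd[OF assms(1)])
  ultimately show ?thesis using M_nonpos[OF assms(1-5)] unfolding defect_M_def by auto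
qed

lemma O_bd: assumes "imprecise_copula A B" "0\<le>x" "x\<le>1" "0\<le>y" "y\<le>1" "x=0 \<or> x=1 \<or> y=0 \<or> y=1"
  shows "defect_O B x y = 0"
proof -
  have "0 \<le> defect_NW B x y"
    using assms by (intro NW_ge) (auto intro!: volB_bd[OF assms(1)])
  moreover have "0 \<le> defect_SE B x y"
    using assms by (intro SE_ge) (auto intro!: volB_bd[OF assms(1)])
  ultimately show ?thesis using O_nonpos[OF assms(1-5)] unfolding defect_O_def by auto
qed

lemma AM_b: assumes ic: "imprecise_copula A B" and r: "0\<le>s1" "s1\<le>s2" "s2\<le>1" "0\<le>t1" "t1\<le>t2" "t2\<le>1"
  shows "defect_M A s1 t1 + defect_M A s2 t2 \<le> vol A s1 s2 t1 t2 + defect_M A s2 t1"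
proof -
  let ?c = "defect_M A s1 t1 + defect_M A s2 t2 - vol A s1 s2 t1 t2"
  have "?c \<le> defect_NE A s2 t1"
  proof (rule NE_ge)
    fix u v assume h: "s2 \<le> u" "u \<le> 1" "t1 \<le> v" "v \<le> 1"
    show "?c \<le> vol A s2 u t1 v"
    proof (cases "t2 \<le> v")
      case True
      have "defect_M A s1 t1 \<le> vol A s1 u t1 t2" by (rule MNE[OF ic]) (use r h True in auto)
      moreover have "defect_M A s2 t2 \<le> vol A s2 u t2 v" by (rule MNE[OF ic]) (use r h True in auto)
      ultimately show ?thesis by (simp add: vol_def)
    next
      case False
      have "defect_M A s1 t1 \<le> vol A s1 u t1 v" by (rule MNE[OF ic]) (use r h False in auto)
      moreover have "defect_M A s2 t2 \<le> vol A s1 s2 v t2" by (rule MSW[OF ic]) (use r h False in auto)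
      ultimately show ?thesis by (simp add: vol_def)
    qed
  qed (use r in auto)
  moreover have "?c \<le> defect_SW A s2 t1"
  proof (rule SW_ge)
    fix u v assume h: "0 \<le> u" "u \<le> s2" "0 \<le> v" "v \<le> t1"
    show "?c \<le> vol A u s2 v t1"
    proof (cases "u \<le> s1")
      case True
      have "defect_M A s1 t1 \<le> vol A u s1 v t1" by (rule MSW[OF ic]) (use r h True in auto)
      moreover have "defect_M A s2 t2 \<le> vol A s1 s2 v t2" by (rule MSW[OF ic]) (use r h True in auto)
      ultimately show ?thesis by (simp add: vol_def)
    next
      case False
      have "defect_M A s1 t1 \<le> vol A s1 u t1 t2" by (rule MNE[OF ic]) (use r h False in auto)
      moreover have "defect_M A s2 t2 \<le> vol A u s2 v t2" by (rule MSW[OF ic]) (use r h False in auto)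
      ultimately show ?thesis by (simp add: vol_def)
    qed
  qed (use r in auto)
  ultimately show ?thesis unfolding defect_M_def by linarith
qed

lemma AM_d: assumes ic: "imprecise_copula A B" and r: "0\<le>s1" "s1\<le>s2" "s2\<le>1" "0\<le>t1" "t1\<le>t2" "t2\<le>1"
  shows "defect_M A s1 t1 + defect_M A s2 t2 \<le> vol A s1 s2 t1 t2 + defect_M A s1 t2"
proof -
  let ?c = "defect_M A s1 t1 + defect_M A s2 t2 - vol A s1 s2 t1 t2"
  have "?c \<le> defect_NE A s1 t2"
  proof (rule NE_ge)
    fix u v assume h: "s1 \<le> u" "u \<le> 1" "t2 \<le> v" "v \<le> 1"
    show "?c \<le> vol A s1 u t2 v"
    proof (cases "s2 \<le> u")
      case True
      have "defect_M A s1 t1 \<le> vol A s1 s2 t1 v" by (rule MNE[OF ic]) (use r h True in auto)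
      moreover have "defect_M A s2 t2 \<le> vol A s2 u t2 v" by (rule MNE[OF ic]) (use r h True in auto)
      ultimately show ?thesis by (simp add: vol_def)
    next
      case False
      have "defect_M A s1 t1 \<le> vol A s1 u t1 v" by (rule MNE[OF ic]) (use r h False in auto)
      moreover have "defect_M A s2 t2 \<le> vol A u s2 t1 t2" by (rule MSW[OF ic]) (use r h False in auto)
      ultimately show ?thesis by (simp add: vol_def)
    qed
  qed (use r in auto)
  moreover have "?c \<le> defect_SW A s1 t2"
  proof (rule SW_ge)
    fix u v assume h: "0 \<le> u" "u \<le> s1" "0 \<le> v" "v \<le> t2"
    show "?c \<le> vol A u s1 v t2"
    proof (cases "v \<le> t1")
      case True
      have "defect_M A s1 t1 \<le> vol A u s1 v t1" by (rule MSW[OF ic]) (use r h True in auto)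
      moreover have "defect_M A s2 t2 \<le> vol A u s2 t1 t2" by (rule MSW[OF ic]) (use r h True in auto)
      ultimately show ?thesis by (simp add: vol_def)
    next
      case False
      have "defect_M A s1 t1 \<le> vol A s1 s2 t1 v" by (rule MNE[OF ic]) (use r h False in auto)
      moreover have "defect_M A s2 t2 \<le> vol A u s2 v t2" by (rule MSW[OF ic]) (use r h False in auto)
      ultimately show ?thesis by (simp add: vol_def)
    qed
  qed (use r in auto)
  ultimately show ?thesis unfolding defect_M_def by linarith
qed

lemma BO_a: assumes ic: "imprecise_copula A B" and r: "0\<le>s1" "s1\<le>s2" "s2\<le>1" "0\<le>t1" "t1\<le>t2" "t2\<le>1"
  shows "defect_O B s2 t1 + defect_O B s1 t2 \<le> vol B s1 s2 t1 t2 + defect_O B s1 t1"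
proof -
  let ?c = "defect_O B s2 t1 + defect_O B s1 t2 - vol B s1 s2 t1 t2"
  have "?c \<le> defect_NW B s1 t1"
  proof (rule NW_ge)
    fix u v assume h: "0 \<le> u" "u \<le> s1" "t1 \<le> v" "v \<le> 1"
    show "?c \<le> vol B u s1 t1 v"
    proof (cases "t2 \<le> v")
      case True
      have "defect_O B s1 t2 \<le> vol B u s1 t2 v" by (rule ONW[OF ic]) (use r h True in auto)
      moreover have "defect_O B s2 t1 \<le> vol B u s2 t1 t2" by (rule ONW[OF ic]) (use r h True in auto)
      ultimately show ?thesis by (simp add: vol_def)
    next
      case False
      have "defect_O B s2 t1 \<le> vol B u s2 t1 v" by (rule ONW[OF ic]) (use r h False in auto)
      moreover have "defect_O B s1 t2 \<le> vol B s1 s2 v t2" by (rule OSE[OF ic]) (use r h False in auto)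
      ultimately show ?thesis by (simp add: vol_def)
    qed
  qed (use r in auto)
  moreover have "?c \<le> defect_SE B s1 t1"
  proof (rule SE_ge)
    fix u v assume h: "s1 \<le> u" "u \<le> 1" "0 \<le> v" "v \<le> t1"
    show "?c \<le> vol B s1 u v t1"
    proof (cases "s2 \<le> u")
      case True
      have "defect_O B s2 t1 \<le> vol B s2 u v t1" by (rule OSE[OF ic]) (use r h True in auto)
      moreover have "defect_O B s1 t2 \<le> vol B s1 s2 v t2" by (rule OSE[OF ic]) (use r h True in auto)
      ultimately show ?thesis by (simp add: vol_def)
    next
      case False
      have "defect_O B s1 t2 \<le> vol B s1 u v t2" by (rule OSE[OF ic]) (use r h False in auto)
      moreover have "defect_O B s2 t1 \<le> vol B u s2 t1 t2" by (rule ONW[OF ic]) (use r h False in auto)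
      ultimately show ?thesis by (simp add: vol_def)
    qed
  qed (use r in auto)
  ultimately show ?thesis unfolding defect_O_def by linarith
qed

lemma BO_c: assumes ic: "imprecise_copula A B" and r: "0\<le>s1" "s1\<le>s2" "s2\<le>1" "0\<le>t1" "t1\<le>t2" "t2\<le>1"
  shows "defect_O B s2 t1 + defect_O B s1 t2 \<le> vol B s1 s2 t1 t2 + defect_O B s2 t2"
proof -
  let ?c = "defect_O B s2 t1 + defect_O B s1 t2 - vol B s1 s2 t1 t2"
  have "?c \<le> defect_NW B s2 t2"
  proof (rule NW_ge)
    fix u v assume h: "0 \<le> u" "u \<le> s2" "t2 \<le> v" "v \<le> 1"
    show "?c \<le> vol B u s2 t2 v"
    proof (cases "u \<le> s1")
      case True
      have "defect_O B s1 t2 \<le> vol B u s1 t2 v" by (rule ONW[OF ic]) (use r h True in auto)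
      moreover have "defect_O B s2 t1 \<le> vol B s1 s2 t1 v" by (rule ONW[OF ic]) (use r h True in auto)
      ultimately show ?thesis by (simp add: vol_def)
    next
      case False
      have "defect_O B s2 t1 \<le> vol B u s2 t1 v" by (rule ONW[OF ic]) (use r h False in auto)
      moreover have "defect_O B s1 t2 \<le> vol B s1 u t1 t2" by (rule OSE[OF ic]) (use r h False in auto)
      ultimately show ?thesis by (simp add: vol_def)
    qed
  qed (use r in auto)
  moreover have "?c \<le> defect_SE B s2 t2"
  proof (rule SE_ge)
    fix u v assume h: "s2 \<le> u" "u \<le> 1" "0 \<le> v" "v \<le> t2"
    show "?c \<le> vol B s2 u v t2"
    proof (cases "v \<le> t1")
      case True
      have "defect_O B s2 t1 \<le> vol B s2 u v t1" by (rule OSE[OF ic]) (use r h True in auto)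
      moreover have "defect_O B s1 t2 \<le> vol B s1 u t1 t2" by (rule OSE[OF ic]) (use r h True in auto)
      ultimately show ?thesis by (simp add: vol_def)
    next
      case False
      have "defect_O B s1 t2 \<le> vol B s1 u v t2" by (rule OSE[OF ic]) (use r h False in auto)
      moreover have "defect_O B s2 t1 \<le> vol B s1 s2 t1 v" by (rule ONW[OF ic]) (use r h False in auto)
      ultimately show ?thesis by (simp add: vol_def)
    qed
  qed (use r in auto)
  ultimately show ?thesis unfolding defect_O_def by linarith
qed

lemma M_ge: assumes ic: "imprecise_copula A B" and r: "0\<le>x" "x\<le>1" "0\<le>y" "y\<le>1"
  shows "A x y - B x y \<le> defect_M A x y"
proof -
  have "A x y - B x y \<le> defect_NE A x y"
  proof (rule NE_ge)
    fix s t assume "x \<le> s" "s \<le> 1" "y \<le> t" "t \<le> 1"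
    then show "A x y - B x y \<le> vol A x s y t" using IC[OF ic, of x s y t] r by (auto simp: vol_def)
  qed (use r in auto)
  moreover have "A x y - B x y \<le> defect_SW A x y"
  proof (rule SW_ge)
    fix s t assume "0 \<le> s" "s \<le> x" "0 \<le> t" "t \<le> y"
    then show "A x y - B x y \<le> vol A s x t y" using IC[OF ic, of s x t y] r by (auto simp: vol_def)
  qed (use r in auto)
  ultimately show ?thesis unfolding defect_M_def by auto
qed

lemma O_ge: assumes ic: "imprecise_copula A B" and r: "0\<le>x" "x\<le>1" "0\<le>y" "y\<le>1"
  shows "A x y - B x y \<le> defect_O B x y"
proof -
  have "A x y - B x y \<le> defect_NW B x y"
  proof (rule NW_ge)
    fix s t assume "0 \<le> s" "s \<le> x" "y \<le> t" "t \<le> 1"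
    then show "A x y - B x y \<le> vol B s x y t" using IC[OF ic, of s x y t] r by (auto simp: vol_def)
  qed (use r in auto)
  moreover have "A x y - B x y \<le> defect_SE B x y"
  proof (rule SE_ge)
    fix s t assume "x \<le> s" "s \<le> 1" "0 \<le> t" "t \<le> y"
    then show "A x y - B x y \<le> vol B x s t y" using IC[OF ic, of x s t y] r by (auto simp: vol_def)
  qed (use r in auto)
  ultimately show ?thesis unfolding defect_O_def by auto
qed

theorem mainTheorem8:
  fixes A B :: "real \<Rightarrow> real \<Rightarrow> real"
  assumes "imprecise_copula A B"
  shows "imprecise_copula A (Q_M A) \<and> imprecise_copula (Q_O B) B \<and>
    (\<forall>x\<in>{0..1}. \<forall>y\<in>{0..1}.
       A x y \<le> Q_M A x y \<and> Q_M A x y \<le> B x y \<and>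
       A x y \<le> Q_O B x y \<and> Q_O B x y \<le> B x y)"
proof -
  note ic = assms
  have g: "grounded A" "neutral_one A" "grounded B" "neutral_one B" using ic unfolding imprecise_copula_def by auto
  have gM: "grounded (Q_M A)" "neutral_one (Q_M A)"
    using g M_bd[OF ic] unfolding grounded_def neutral_one_def Q_M_def by auto
  have gO: "grounded (Q_O B)" "neutral_one (Q_O B)"
    using g O_bd[OF ic] unfolding grounded_def neutral_one_def Q_O_def by auto
  have 1: "imprecise_copula A (Q_M A)"
    unfolding imprecise_copula_def
    apply (intro conjI g gM)
    apply (intro allI impI)
    subgoal premises r for s1 s2 t1 t2
  proof -
    have a: "defect_M A s2 t2 \<le> vol A s1 s2 t1 t2" by (rule MSW[OF ic]) (use r in auto)
    have b: "defect_M A s1 t1 \<le> vol A s1 s2 t1 t2" by (rule MNE[OF ic]) (use r in auto)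
    have c: "defect_M A s1 t1 + defect_M A s2 t2 \<le> vol A s1 s2 t1 t2 + defect_M A s2 t1"
      by (rule AM_b[OF ic]) (use r in auto)
    have d: "defect_M A s1 t1 + defect_M A s2 t2 \<le> vol A s1 s2 t1 t2 + defect_M A s1 t2"
      by (rule AM_d[OF ic]) (use r in auto)
    show "A s1 t1 + Q_M A s2 t2 - A s2 t1 - A s1 t2 \<ge> 0 \<and>
        Q_M A s1 t1 + A s2 t2 - A s2 t1 - A s1 t2 \<ge> 0 \<and>
        Q_M A s1 t1 + Q_M A s2 t2 - Q_M A s2 t1 - A s1 t2 \<ge> 0 \<and>
        Q_M A s1 t1 + Q_M A s2 t2 - A s2 t1 - Q_M A s1 t2 \<ge> 0"
      using a b c d by (simp add: Q_M_def vol_def)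
  qed
  done
  have 2: "imprecise_copula (Q_O B) B"
    unfolding imprecise_copula_def
    apply (intro conjI g gO)
    apply (intro allI impI)
    subgoal premises r for s1 s2 t1 t2
  proof -
    have a: "defect_O B s1 t2 \<le> vol B s1 s2 t1 t2" by (rule OSE[OF ic]) (use r in auto)
    have b: "defect_O B s2 t1 \<le> vol B s1 s2 t1 t2" by (rule ONW[OF ic]) (use r in auto)
    have c: "defect_O B s2 t1 + defect_O B s1 t2 \<le> vol B s1 s2 t1 t2 + defect_O B s1 t1"
      by (rule BO_a[OF ic]) (use r in auto)
    have d: "defect_O B s2 t1 + defect_O B s1 t2 \<le> vol B s1 s2 t1 t2 + defect_O B s2 t2"
      by (rule BO_c[OF ic]) (use r in auto)
    show "Q_O B s1 t1 + B s2 t2 - Q_O B s2 t1 - Q_O B s1 t2 \<ge> 0 \<and>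
        B s1 t1 + Q_O B s2 t2 - Q_O B s2 t1 - Q_O B s1 t2 \<ge> 0 \<and>
        B s1 t1 + B s2 t2 - B s2 t1 - Q_O B s1 t2 \<ge> 0 \<and>
        B s1 t1 + B s2 t2 - Q_O B s2 t1 - B s1 t2 \<ge> 0"
      using a b c d by (simp add: Q_O_def vol_def)
  qed
  done
  have 3: "\<forall>x\<in>{0..1}. \<forall>y\<in>{0..1}.
       A x y \<le> Q_M A x y \<and> Q_M A x y \<le> B x y \<and>
       A x y \<le> Q_O B x y \<and> Q_O B x y \<le> B x y"
  proof (intro ballI)
    fix x y :: real assume "x \<in> {0..1}" "y \<in> {0..1}"
    then have r: "0\<le>x" "x\<le>1" "0\<le>y" "y\<le>1" by auto
    show "A x y \<le> Q_M A x y \<and> Q_M A x y \<le> B x y \<and> A x y \<le> Q_O B x y \<and> Q_O B x y \<le> B x y"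
      using M_nonpos[OF ic r] O_nonpos[OF ic r] M_ge[OF ic r] O_ge[OF ic r]
      by (simp add: Q_M_def Q_O_def)
  qed
  show ?thesis using 1 2 3 by blast
qed

end
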